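(* $$\int_{0}^{1}\frac{\log(x)\,\log(\log x)\,\tanh^{-1}(x)}{x}\,dx=\frac18\Big(-7\zeta'(3)+\zeta(3)\big(-7+7\gamma-7i\pi-\log 2\big)\Big),$$ where $\gamma$ is Euler's constant and $\zeta$ the Riemann zeta function.
   Context: For $x\in(0,1)$, $\log(\log x)=\log|\log x|+i\pi$ (principal branch). *)

theory Defs
  imports "HOL-Analysis.Analysis"
begin

text \<open>Riemann zeta function on its half-plane of convergence Re s > 1,
  given by its defining Dirichlet series (sum over n >= 1 of n^(-s)).
  Only values/derivatives at s = 3 (interior of that half-plane) are used.\<close>
definition zeta :: "complex \<Rightarrow> complex" where
  "zeta s = (\<Sum>n. 1 / (of_nat (Suc n)) powr s)"

end

theory Submission
  imports Defs
begin


lemma scale_abs: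
  fixes f :: "real \<Rightarrow> 'a::euclidean_space"
  assumes f: "f absolutely_integrable_on {0<..}" and c: "c > 0"
  shows "(\<lambda>t. f (c*t)) absolutely_integrable_on {0<..} \<and>
         integral {0<..} (\<lambda>t. f (c*t)) = integral {0<..} f /\<^sub>R c"
proof -
  have img: "(\<lambda>t. c*t) ` {0<..} = ({0<..}::real set)"
  proof safe
    fix x :: real assume "x > 0" then show "x \<in> (\<lambda>t. c*t) ` {0<..}"
      using c by (intro image_eqI[of _ _ "x/c"]) auto
  qed (use c in auto)
  have "(\<lambda>t. \<bar>c\<bar> *\<^sub>R f (c*t)) absolutely_integrable_on {0<..} \<and>
        integral {0<..} (\<lambda>t. \<bar>c\<bar> *\<^sub>R f (c*t)) = integral {0<..} f"
    apply (subst has_absolute_integral_change_of_variables_real[where g="\<lambda>t. c*t" and h="\<lambda>_. c"])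
    using f c by (auto intro!: derivative_eq_intros inj_onI simp: img)
  then have A: "(\<lambda>t. c *\<^sub>R f (c*t)) absolutely_integrable_on {0<..}"
        and B: "integral {0<..} (\<lambda>t. c *\<^sub>R f (c*t)) = integral {0<..} f" using c by auto
  have eq: "(\<lambda>t. f (c*t)) = (\<lambda>t. (1/c) *\<^sub>R (c *\<^sub>R f (c*t)))" using c by auto
  have A2: "(\<lambda>t. f (c*t)) absolutely_integrable_on {0<..}"
    by (subst eq) (rule absolutely_integrable_scaleR_left[OF A])
  have "integral {0<..} (\<lambda>t. f (c*t)) = (1/c) *\<^sub>R integral {0<..} (\<lambda>t. c *\<^sub>R f (c*t))"
    by (subst eq) (rule integral_cmul)
  then have C: "integral {0<..} (\<lambda>t. f (c*t)) = inverse c *\<^sub>R integral {0<..} f"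
    by (simp only: B inverse_eq_divide)
  show ?thesis using A2 C by blast
qed



lemma Ioi_vs_Ici: "((f::real\<Rightarrow>'a::banach) has_integral y) {0<..} \<longleftrightarrow> (f has_integral y) {0..}"
  by (rule has_integral_spike_set_eq) (auto intro: negligible_subset[OF negligible_sing[of 0]])

lemma pow_exp1: "((\<lambda>t::real. t^n * exp(-t)) has_integral fact n) {0<..}"
proof -
  have "((\<lambda>t. t powr (real (Suc n) - 1) / exp t) has_integral Gamma (real (Suc n))) {0..}"
    by (rule Gamma_integral_real) simp
  then have "((\<lambda>t. t powr (real (Suc n) - 1) / exp t) has_integral fact n) {0<..}"
    using Gamma_fact[of n, where 'a=real] by (simp add: Ioi_vs_Ici add.commute)
  then show ?thesis
    by (rule has_integral_spike[of "{}", rotated 2]) (auto simp: powr_realpow exp_minus field_simps)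
qed

lemma pow_exp:
  assumes a: "a > 0"
  shows "(\<lambda>t::real. t^n * exp(-(a*t))) absolutely_integrable_on {0<..} \<and>
         integral {0<..} (\<lambda>t. t^n * exp(-(a*t))) = fact n / a^(Suc n)"
proof -
  have ai: "(\<lambda>t::real. t^n * exp(-t)) absolutely_integrable_on {0<..}"
    using pow_exp1[of n] by (intro nonnegative_absolutely_integrable_1) (auto simp: has_integral_integrable)
  have ii: "integral {0<..} (\<lambda>t::real. t^n * exp(-t)) = fact n"
    using pow_exp1[of n] by (rule integral_unique)
  from scale_abs[OF ai a]
  have 1: "(\<lambda>t. (a*t)^n * exp(-(a*t))) absolutely_integrable_on {0<..}"
    and 2: "integral {0<..} (\<lambda>t. (a*t)^n * exp(-(a*t))) = fact n / a" by (auto simp: ii field_simps)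
  have eq: "(\<lambda>t. t^n * exp(-(a*t))) = (\<lambda>t. (1/a^n) * ((a*t)^n * exp(-(a*t))))"
    using a by (auto simp: power_mult_distrib)
  have 3: "integral {0<..} (\<lambda>t. (1/a^n) * ((a*t)^n * exp(-(a*t)))) = (1/a^n) * (fact n / a)"
    by (simp only: integral_mult_right 2)
  have 4: "(\<lambda>t. (1/a^n) * ((a*t)^n * exp(-(a*t)))) absolutely_integrable_on {0<..}"
    using absolutely_integrable_scaleR_left[OF 1, of "1/a^n"] by simp
  show ?thesis unfolding eq using 3 4 by (simp add: field_simps)
qed



lemma bound_aux:
  fixes t h :: real
  assumes t: "t > 0" and h: "0 < h" "h \<le> 1"
  shows "\<bar>t * ((t powr h - 1) / h) * exp (-t)\<bar> \<le> (1 + t^3) * exp(-t)"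
proof -
  have "\<bar>t * ((t powr h - 1) / h)\<bar> \<le> 1 + t^3"
  proof (cases "t \<ge> 1")
    case True
    define u where "u = h * ln t"
    have u: "u \<ge> 0" using True h by (simp add: u_def)
    have tp: "t powr h = exp u" using t by (simp add: powr_def u_def mult.commute)
    have e1: "exp u - 1 \<le> u * exp u"
    proof -
      have "exp (-u) \<ge> 1 + (-u)" by (rule exp_ge_add_one_self)
      then have "exp (-u) * exp u \<ge> (1 - u) * exp u" by (intro mult_right_mono) auto
      then show ?thesis by (simp add: exp_minus field_simps)
    qed
    have e0: "exp u - 1 \<ge> 0" using u by simp
    have q0: "(t powr h - 1) / h \<ge> 0" using e0 h tp by simp
    have "(t powr h - 1) / h \<le> ln t * t powr h" using e1 h tp by (simp add: u_def field_simps)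
    also have "\<dots> \<le> t * t"
    proof (rule mult_mono)
      show "ln t \<le> t" using ln_le_minus_one[OF t] by simp
      show "t powr h \<le> t" using powr_mono[of h 1 t] True h by simp
    qed (use True in auto)
    finally have X: "t * ((t powr h - 1) / h) \<le> t * (t * t)" using t by (intro mult_left_mono) auto
    have Y: "0 \<le> t * ((t powr h - 1) / h)" using q0 t by (intro mult_nonneg_nonneg) auto
    have Z: "t*(t*t) \<le> 1 + t^3" by (simp add: power3_eq_cube mult.assoc)
    show ?thesis unfolding abs_of_nonneg[OF Y] using X Z by linarith
  next
    case False
    define u where "u = h * ln t"
    have u: "u \<le> 0" using False h t by (simp add: u_def mult_nonneg_nonpos)
    have tp: "t powr h = exp u" using t by (simp add: powr_def u_def mult.commute)
    have e1: "1 - exp u \<le> -u" using exp_ge_add_one_self[of u] by linarith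
    have e0: "1 - exp u \<ge> 0" using u by simp
    have np: "(t powr h - 1) / h \<le> 0" using e0 h tp by (simp add: divide_nonpos_pos)
    have "\<bar>(t powr h - 1) / h\<bar> = (1 - exp u) / h" unfolding abs_of_nonpos[OF np] using h tp by (simp add: field_simps)
    also have "\<dots> \<le> -ln t" using e1 h by (simp add: u_def field_simps)
    also have "\<dots> \<le> 1/t - 1" using ln_le_minus_one[of "1/t"] t by (simp add: ln_div)
    finally have X: "t * \<bar>(t powr h - 1) / h\<bar> \<le> t * (1/t - 1)" using t by (intro mult_left_mono) auto
    have Y: "t * (1/t - 1) = 1 - t" using t by (simp add: field_simps)
    have Z: "\<bar>t * ((t powr h - 1) / h)\<bar> = t * \<bar>(t powr h - 1) / h\<bar>" using t by (simp add: abs_mult)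
    have W: "0 \<le> t^3" using t by simp
    show ?thesis unfolding Z using X Y W t by linarith
  qed
  then have "\<bar>t * ((t powr h - 1) / h)\<bar> * exp (-t) \<le> (1 + t^3) * exp(-t)"
    by (rule mult_right_mono) simp
  then show ?thesis by (simp add: abs_mult)
qed

lemma tlog_exp1: "((\<lambda>t::real. t * ln t * exp(-t)) has_integral (1 - euler_mascheroni)) {0<..}"
proof -
  define h :: "nat \<Rightarrow> real" where "h k = 1 / real (Suc (Suc k))" for k
  have hpos: "0 < h k" "h k \<le> 1" for k by (auto simp: h_def field_simps)
  have hlim: "h \<longlonglongrightarrow> 0"
    using LIMSEQ_Suc[OF LIMSEQ_inverse_real_of_nat] unfolding h_def[abs_def] by (simp add: inverse_eq_divide add.commute)
  have hat: "filterlim h (at 0) sequentially"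
    using hlim hpos(1) by (intro filterlim_atI) (auto intro!: always_eventually simp: less_imp_neq[symmetric])
  define f where "f k t = t * ((t powr (h k) - 1) / h k) * exp (-t)" for k t
  define y where "y k = (Gamma (2 + h k) - Gamma 2) / ((2 + h k) - 2)" for k
  have G1: "((\<lambda>t::real. t^1 * exp(-t)) has_integral 1) {0<..}"
    using pow_exp1[of 1] by simp
  have fint: "(f k has_integral y k) {0<..}" for k
  proof -
    have "((\<lambda>t. t powr (2 + h k - 1) / exp t) has_integral Gamma (2 + h k)) {0..}"
      by (rule Gamma_integral_real) (use hpos[of k] in simp)
    then have A: "((\<lambda>t. t powr (2 + h k - 1) / exp t) has_integral Gamma (2 + h k)) {0<..}"
      by (simp add: Ioi_vs_Ici)
    have B: "((\<lambda>t. (t powr (2 + h k - 1) / exp t - t^1 * exp(-t)) / h k) has_integral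
              (Gamma (2 + h k) - 1) / h k) {0<..}"
      by (intro has_integral_divide has_integral_diff A G1)
    have g2: "Gamma (2::real) = 1" using Gamma_numeral[of "num.Bit0 num.One"] by simp
    have e: "2 + h k - 2 = h k" by simp
    show ?thesis
      unfolding y_def g2 e
      by (rule has_integral_eq[OF _ B]) (auto simp: f_def powr_add exp_minus field_simps)
  qed
  have dom: "norm (f k t) \<le> (1 + t^3) * exp(-t)" if "t \<in> {0<..}" for k t
    using bound_aux[of t "h k"] hpos[of k] that by (simp add: f_def)
  have domi: "(\<lambda>t::real. (1 + t^3) * exp(-t)) integrable_on {0<..}"
  proof -
    have "(\<lambda>t::real. t^0 * exp(-(1*t))) integrable_on {0<..}" "(\<lambda>t::real. t^3 * exp(-(1*t))) integrable_on {0<..}"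
      using pow_exp[of 1 0] pow_exp[of 1 3] by (auto dest: set_lebesgue_integral_eq_integral(1))
    from integrable_add[OF this] show ?thesis by (simp add: algebra_simps)
  qed
  have conv: "(\<lambda>k. f k t) \<longlonglongrightarrow> t * ln t * exp(-t)" if t: "t \<in> {0<..}" for t
  proof -
    have d: "((\<lambda>u. exp (u * ln t)) has_field_derivative ln t) (at 0)"
      by (auto intro!: derivative_eq_intros)
    then have "((\<lambda>u. (exp (u * ln t) - exp (0 * ln t)) / (u - 0)) \<longlongrightarrow> ln t) (at 0)"
      by (simp only: has_field_derivative_iff)
    from filterlim_compose[OF this hat]
    have "(\<lambda>k. (exp (h k * ln t) - 1) / h k) \<longlonglongrightarrow> ln t" by simp
    then have "(\<lambda>k. t * ((exp (h k * ln t) - 1) / h k) * exp (-t)) \<longlonglongrightarrow> t * ln t * exp(-t)"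
      by (intro tendsto_intros)
    then show ?thesis using t by (simp add: f_def powr_def)
  qed
  have ylim: "y \<longlonglongrightarrow> Gamma 2 * Digamma (2::real)"
  proof -
    have "2 \<notin> (\<int>\<^sub>\<le>\<^sub>0 :: real set)" by (auto elim!: nonpos_Ints_cases)
    then have "(Gamma has_field_derivative Gamma 2 * Digamma (2::real)) (at 2)"
      by (rule has_field_derivative_Gamma)
    then have "((\<lambda>u. (Gamma u - Gamma 2) / (u - 2)) \<longlongrightarrow> Gamma 2 * Digamma (2::real)) (at 2)"
      by (simp only: has_field_derivative_iff)
    moreover have "filterlim (\<lambda>k. 2 + h k) (at 2) sequentially"
      using hpos(1) by (intro filterlim_atI) (auto intro!: always_eventually tendsto_eq_intros hlim simp: less_imp_neq[symmetric])
    ultimately show ?thesis unfolding y_def[abs_def] by (rule filterlim_compose)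
  qed
  have "((\<lambda>t. t * ln t * exp(-t)) has_integral Gamma 2 * Digamma (2::real)) {0<..}"
    by (rule has_integral_dominated_convergence[OF fint domi _ _ ylim]) (use dom conv in auto)
  moreover have "Gamma 2 * Digamma (2::real) = 1 - euler_mascheroni"
  proof -
    have g2: "Gamma (2::real) = 1" using Gamma_numeral[of "num.Bit0 num.One"] by simp
    have "Digamma (2::real) = Digamma (1 + 1)" by simp
    also have "\<dots> = Digamma 1 + 1/1" by (rule Digamma_plus1) simp
    finally show ?thesis using g2 by simp
  qed
  ultimately show ?thesis by simp
qed



lemma ai_cong:
  assumes "\<And>x. x \<in> S \<Longrightarrow> f x = g x" "f absolutely_integrable_on S"
  shows "g absolutely_integrable_on S"
  using set_integrable_cong[of lebesgue lebesgue S S f g] assms by auto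

lemma tlog_bound:
  fixes t :: real assumes t: "t > 0"
  shows "t * \<bar>ln t\<bar> \<le> 1 + t^2"
proof (cases "t \<ge> 1")
  case True
  have "ln t \<le> t" using ln_le_minus_one[OF t] by simp
  then have "t * ln t \<le> t * t" using t by (intro mult_left_mono) auto
  moreover have "\<bar>ln t\<bar> = ln t" using True by simp
  ultimately show ?thesis by (simp add: power2_eq_square)
next
  case False
  have "-ln t \<le> 1/t - 1" using ln_le_minus_one[of "1/t"] t by (simp add: ln_div)
  then have "t * (-ln t) \<le> t * (1/t - 1)" using t by (intro mult_left_mono) auto
  moreover have "t * (1/t - 1) = 1 - t" using t by (simp add: field_simps)
  moreover have "\<bar>ln t\<bar> = -ln t" using False t by simp
  ultimately have "t * \<bar>ln t\<bar> \<le> 1 - t" by simp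
  moreover have "0 \<le> t^2" by simp
  ultimately show ?thesis using t by linarith
qed

lemma tlog_exp:
  assumes a: "a > 0"
  shows "(\<lambda>t::real. t * ln t * exp(-(a*t))) absolutely_integrable_on {0<..} \<and>
         integral {0<..} (\<lambda>t. t * ln t * exp(-(a*t))) = (1 - euler_mascheroni - ln a) / a^2"
proof -
  have g: "(\<lambda>t::real. (1 + t^2) * exp(-t)) integrable_on {0<..}"
  proof -
    have "(\<lambda>t::real. t^0 * exp(-(1*t))) integrable_on {0<..}" "(\<lambda>t::real. t^2 * exp(-(1*t))) integrable_on {0<..}"
      using pow_exp[of 1 0] pow_exp[of 1 2] by (auto dest: set_lebesgue_integral_eq_integral(1))
    from integrable_add[OF this] show ?thesis by (simp add: algebra_simps)
  qed
  have ai1: "(\<lambda>t::real. t * ln t * exp(-t)) absolutely_integrable_on {0<..}"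
  proof (rule absolutely_integrable_integrable_bound[OF _ _ g])
    show "(\<lambda>t::real. t * ln t * exp(-t)) integrable_on {0<..}"
      using tlog_exp1 by (auto simp: has_integral_integrable)
    fix t :: real assume "t \<in> {0<..}"
    then have t: "t > 0" by simp
    have "\<bar>t * ln t\<bar> * exp(-t) \<le> (1 + t^2) * exp(-t)"
      using tlog_bound[OF t] t by (intro mult_right_mono) (auto simp: abs_mult)
    then show "norm (t * ln t * exp(-t)) \<le> (1 + t^2) * exp(-t)" by (simp add: abs_mult)
  qed
  have ii1: "integral {0<..} (\<lambda>t::real. t * ln t * exp(-t)) = 1 - euler_mascheroni"
    using tlog_exp1 by (rule integral_unique)
  from scale_abs[OF ai1 a]
  have s1: "(\<lambda>t. (a*t) * ln (a*t) * exp(-(a*t))) absolutely_integrable_on {0<..}"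
    and s2: "integral {0<..} (\<lambda>t. (a*t) * ln (a*t) * exp(-(a*t))) = (1 - euler_mascheroni) / a"
    by (auto simp: ii1 divide_inverse_commute)
  have p1: "(\<lambda>t::real. t^1 * exp(-(a*t))) absolutely_integrable_on {0<..}"
    and p2: "integral {0<..} (\<lambda>t::real. t^1 * exp(-(a*t))) = 1 / a^2"
    using pow_exp[of a 1] a by (auto simp: power2_eq_square)
  define F where "F t = (1/a) * ((a*t) * ln (a*t) * exp(-(a*t))) - ln a * (t^1 * exp(-(a*t)))" for t
  have s3: "(\<lambda>t. (1/a) * ((a*t) * ln (a*t) * exp(-(a*t)))) absolutely_integrable_on {0<..}"
    using absolutely_integrable_scaleR_left[OF s1, of "1/a"] by simp
  have p3: "(\<lambda>t. ln a * (t^1 * exp(-(a*t)))) absolutely_integrable_on {0<..}"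
    using absolutely_integrable_scaleR_left[OF p1, of "ln a"] by simp
  have Fai: "F absolutely_integrable_on {0<..}"
    unfolding F_def[abs_def] by (rule set_integral_diff(1)[OF s3 p3])
  have Fi: "integral {0<..} F = (1/a) * ((1 - euler_mascheroni) / a) - ln a * (1/a^2)"
  proof -
    have "integral {0<..} F = integral {0<..} (\<lambda>t. (1/a) * ((a*t) * ln (a*t) * exp(-(a*t))))
           - integral {0<..} (\<lambda>t. ln a * (t^1 * exp(-(a*t))))"
      unfolding F_def[abs_def]
      by (rule integral_diff[OF set_lebesgue_integral_eq_integral(1)[OF s3] set_lebesgue_integral_eq_integral(1)[OF p3]])
    also have "\<dots> = (1/a) * ((1 - euler_mascheroni) / a) - ln a * (1/a^2)"
      by (simp only: integral_mult_right s2 p2)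
    finally show ?thesis .
  qed
  have Feq: "F t = t * ln t * exp(-(a*t))" if "t \<in> {0<..}" for t
    using that a by (simp add: F_def ln_mult field_simps)
  have "integral {0<..} (\<lambda>t. t * ln t * exp(-(a*t))) = integral {0<..} F"
    by (rule integral_cong) (simp add: Feq)
  also have "\<dots> = (1 - euler_mascheroni - ln a) / a^2"
    unfolding Fi using a by (simp add: field_simps power2_eq_square)
  finally show ?thesis using ai_cong[OF Feq Fai] by simp
qed



definition Fk :: "real \<Rightarrow> real \<Rightarrow> complex" where
  "Fk a t = - (complex_of_real (t * ln t * exp(-(a*t))) + \<i> * complex_of_real (pi * (t^1 * exp(-(a*t))))) / complex_of_real a"

lemma Fk_props:
  assumes a: "a \<ge> 1"
  shows "Fk a absolutely_integrable_on {0<..}"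
    and "integral {0<..} (Fk a) = - (complex_of_real (1 - euler_mascheroni - ln a) + \<i> * complex_of_real pi) / complex_of_real (a^3)"
    and "integral {0<..} (\<lambda>t. norm (Fk a t)) \<le> (3 + pi) / a^2"
proof -
  have a0: "a > 0" using a by simp
  note T = tlog_exp[OF a0]
  have A: "((\<lambda>t. t * ln t * exp(-(a*t))) has_integral (1 - euler_mascheroni - ln a) / a^2) {0<..}"
    using T by (metis set_lebesgue_integral_eq_integral(1) integrable_integral)
  have pe: "((\<lambda>t::real. t^n * exp(-(a*t))) has_integral fact n / a^(Suc n)) {0<..}" for n
    using pow_exp[OF a0, of n] by (metis set_lebesgue_integral_eq_integral(1) integrable_integral)
  have B: "((\<lambda>t. pi * (t^1 * exp(-(a*t)))) has_integral pi * (1 / a^2)) {0<..}"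
    using has_integral_mult_right[OF pe[of 1], of pi] by (simp add: power2_eq_square)
  have I: "(Fk a has_integral - (complex_of_real ((1 - euler_mascheroni - ln a) / a^2) + \<i> * complex_of_real (pi * (1 / a^2))) / complex_of_real a) {0<..}"
    unfolding Fk_def[abs_def]
    by (intro has_integral_divide has_integral_neg has_integral_add has_integral_mult_right
              has_integral_of_real A B)
  define g where "g t = ((1 + t^2) * exp(-(a*t)) + pi * (t^1 * exp(-(a*t)))) / a" for t
  have gI: "(g has_integral ((fact 0 / a^1 + fact 2 / a^3) + pi * (fact 1 / a^2)) / a) {0<..}"
    unfolding g_def[abs_def]
    using has_integral_divide[OF has_integral_add[OF has_integral_add[OF pe[of 0] pe[of 2]] has_integral_mult_right[OF pe[of 1], of pi]], of a]
    by (simp add: algebra_simps power2_eq_square)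
  have bound: "norm (Fk a t) \<le> g t" if "t \<in> {0<..}" for t
  proof -
    have t: "t > 0" using that by simp
    have "norm (complex_of_real (t * ln t * exp(-(a*t))) + \<i> * complex_of_real (pi * (t^1 * exp(-(a*t)))))
          \<le> norm (complex_of_real (t * ln t * exp(-(a*t)))) + norm (\<i> * complex_of_real (pi * (t^1 * exp(-(a*t)))))"
      by (rule norm_triangle_ineq)
    also have "\<dots> = \<bar>t * ln t\<bar> * exp(-(a*t)) + pi * (t * exp(-(a*t)))"
      using t by (simp add: abs_mult norm_mult)
    also have "\<dots> \<le> (1 + t^2) * exp(-(a*t)) + pi * (t^1 * exp(-(a*t)))"
      using tlog_bound[OF t] t by (simp add: mult_right_mono abs_mult)
    finally have X: "norm (complex_of_real (t * ln t * exp(-(a*t))) + \<i> * complex_of_real (pi * (t^1 * exp(-(a*t)))))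
          \<le> (1 + t^2) * exp(-(a*t)) + pi * (t^1 * exp(-(a*t)))" .
    have "norm (Fk a t) = norm (complex_of_real (t * ln t * exp(-(a*t))) + \<i> * complex_of_real (pi * (t^1 * exp(-(a*t))))) / a"
      unfolding Fk_def norm_divide norm_minus_cancel using a0 by simp
    also have "\<dots> \<le> g t" unfolding g_def by (rule divide_right_mono[OF X]) (use a0 in simp)
    finally show ?thesis .
  qed
  have Fint: "Fk a integrable_on {0<..}" using I by (auto simp: has_integral_integrable)
  have gint: "g integrable_on {0<..}" using gI by (auto simp: has_integral_integrable)
  show ai: "Fk a absolutely_integrable_on {0<..}"
    by (rule absolutely_integrable_integrable_bound[OF bound Fint gint])
  show "integral {0<..} (Fk a) = - (complex_of_real (1 - euler_mascheroni - ln a) + \<i> * complex_of_real pi) / complex_of_real (a^3)"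
    using integral_unique[OF I] a0 by (simp add: field_simps power2_eq_square power3_eq_cube)
  have "integral {0<..} (\<lambda>t. norm (Fk a t)) \<le> integral {0<..} g"
    by (rule integral_le) (use ai bound gint in \<open>auto simp: absolutely_integrable_on_def\<close>)
  also have "\<dots> = ((fact 0 / a^1 + fact 2 / a^3) + pi * (fact 1 / a^2)) / a"
    using gI by (rule integral_unique)
  also have "\<dots> \<le> (3 + pi) / a^2"
  proof -
    have "((fact 0 / a^1 + fact 2 / a^3) + pi * (fact 1 / a^2)) / a = (1 / a^2) * (1 + 2/a^2 + pi/a)"
      using a0 by (simp add: field_simps power2_eq_square power3_eq_cube)
    also have "\<dots> \<le> (1 / a^2) * (3 + pi)"
    proof (rule mult_left_mono)
      have "2/a^2 \<le> 2" using a by (simp add: field_simps)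
      moreover have "pi/a \<le> pi" using a by (simp add: field_simps)
      ultimately show "1 + 2/a^2 + pi/a \<le> 3 + pi" by linarith
    qed simp
    finally show ?thesis by simp
  qed
  finally show "integral {0<..} (\<lambda>t. norm (Fk a t)) \<le> (3 + pi) / a^2" .
qed



definition LL :: "nat \<Rightarrow> real" where "LL n = ln (real (Suc n))"

lemma exp_3L: "exp (-(3 * LL n)) = 1 / real (Suc n) ^ 3"
proof -
  have a: "exp (-(3 * LL n)) = real (Suc n) powr (-3)"
    by (simp add: LL_def powr_def)
  have b: "real (Suc n) powr (-3) = inverse (real (Suc n) powr 3)" by (rule powr_minus)
  have c: "real (Suc n) powr 3 = real (Suc n) ^ 3"
    using powr_realpow[of "real (Suc n)" 3] by (simp del: of_nat_Suc)
  show ?thesis unfolding a b c by (simp only: inverse_eq_divide)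
qed

lemma summ_inv2: "summable (\<lambda>n. 1 / real (Suc n) ^ 2)"
proof -
  have A: "summable (\<lambda>n::nat. inverse (real n ^ 2))" by (rule inverse_power_summable) simp
  have "summable (\<lambda>n. inverse (real (Suc n) ^ 2))" by (rule iffD2[OF summable_Suc_iff A])
  then show ?thesis by (simp only: inverse_eq_divide)
qed

lemma summ_inv3: "summable (\<lambda>n. 1 / real (Suc n) ^ 3)"
proof -
  have A: "summable (\<lambda>n::nat. inverse (real n ^ 3))" by (rule inverse_power_summable) simp
  have "summable (\<lambda>n. inverse (real (Suc n) ^ 3))" by (rule iffD2[OF summable_Suc_iff A])
  then show ?thesis by (simp only: inverse_eq_divide)
qed

lemma summ_D: "summable (\<lambda>n. LL n / real (Suc n) ^ 3)"
proof (rule summable_comparison_test'[OF summ_inv2])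
  fix n :: nat
  have x: "real (Suc n) > 0" by simp
  have L0: "LL n \<ge> 0" by (simp add: LL_def)
  have "LL n \<le> real (Suc n)" unfolding LL_def using ln_le_minus_one[OF x] by simp
  then have "LL n / real (Suc n) ^ 3 \<le> real (Suc n) / real (Suc n) ^ 3"
    by (rule divide_right_mono) simp
  also have "\<dots> = 1 / real (Suc n) ^ 2" by (simp add: power2_eq_square power3_eq_cube)
  finally show "norm (LL n / real (Suc n) ^ 3) \<le> 1 / real (Suc n) ^ 2" using L0 by simp
qed

lemma zeta_exp: "zeta = (\<lambda>s. \<Sum>n. exp (-(s * complex_of_real (LL n))))"
proof (intro ext)
  fix s :: complex
  have "1 / (of_nat (Suc n) :: complex) powr s = exp (-(s * complex_of_real (LL n)))" for n
  proof -
    have "Ln (of_nat (Suc n) :: complex) = complex_of_real (LL n)"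
      unfolding LL_def by (subst Ln_of_nat) auto
    moreover have nz: "(of_nat (Suc n) :: complex) \<noteq> 0" by (metis of_nat_eq_0_iff nat.distinct(1))
    ultimately have "(of_nat (Suc n) :: complex) powr s = exp (s * complex_of_real (LL n))"
      unfolding powr_def by (simp only: if_not_P[OF nz] if_False)
    moreover have "1 / exp (s * complex_of_real (LL n)) = exp (-(s * complex_of_real (LL n)))"
      by (simp add: exp_minus inverse_eq_divide)
    ultimately show ?thesis by (simp only:)
  qed
  then show "zeta s = (\<Sum>n. exp (-(s * complex_of_real (LL n))))"
    unfolding zeta_def by (simp only:)
qed

lemma zeta3: "zeta 3 = complex_of_real (\<Sum>n. 1 / real (Suc n) ^ 3)"
proof -
  have e: "(\<lambda>n. exp (-(3 * complex_of_real (LL n)))) = (\<lambda>n. complex_of_real (1 / real (Suc n) ^ 3))"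
  proof
    fix n
    have "exp (-(3 * complex_of_real (LL n))) = exp (complex_of_real (-(3 * LL n)))" by simp
    also have "\<dots> = complex_of_real (exp (-(3 * LL n)))" by (rule exp_of_real)
    finally show "exp (-(3 * complex_of_real (LL n))) = complex_of_real (1 / real (Suc n) ^ 3)"
      by (simp only: exp_3L)
  qed
  have "zeta 3 = (\<Sum>n. exp (-(3 * complex_of_real (LL n))))" unfolding zeta_exp by (rule refl)
  also have "\<dots> = (\<Sum>n. complex_of_real (1 / real (Suc n) ^ 3))" by (simp only: e)
  also have "\<dots> = complex_of_real (\<Sum>n. 1 / real (Suc n) ^ 3)" by (rule suminf_of_real[OF summ_inv3, symmetric])
  finally show ?thesis .
qed

lemma summ_M: "summable (\<lambda>n. real (Suc n) powr (-3/2))"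
proof -
  have "summable (\<lambda>n. real n powr (-3/2))" by (subst summable_real_powr_iff) simp
  then show ?thesis by (rule iffD2[OF summable_Suc_iff])
qed

lemma deriv_bound:
  assumes s: "s \<in> ball (3::complex) (1/2)"
  shows "norm (-(complex_of_real (LL n)) * exp (-(s * complex_of_real (LL n)))) \<le> real (Suc n) powr (-3/2)"
proof -
  define x where "x = real (Suc n)"
  have x: "x > 0" by (simp add: x_def)
  have L0: "LL n \<ge> 0" by (simp add: LL_def)
  have Lx: "LL n \<le> x" unfolding LL_def x_def using ln_le_minus_one[of "real (Suc n)"] by simp
  have "\<bar>Re (3 - s)\<bar> \<le> norm (3 - s)" by (rule abs_Re_le_cmod)
  moreover have "norm (3 - s) < 1/2" using s by (simp add: dist_norm)
  ultimately have Re: "Re s \<ge> 5/2" by simp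
  have "norm (-(complex_of_real (LL n)) * exp (-(s * complex_of_real (LL n)))) = LL n * exp (-(Re s * LL n))"
    using L0 by (simp add: norm_mult)
  also have "\<dots> \<le> x * exp (-(5/2 * LL n))"
  proof (rule mult_mono)
    show "exp (-(Re s * LL n)) \<le> exp (-(5/2 * LL n))"
      using mult_right_mono[OF Re L0] by simp
  qed (use Lx L0 x in auto)
  also have "exp (-(5/2 * LL n)) = x powr (-5/2)"
    using x by (simp add: LL_def x_def powr_def)
  also have "x * x powr (-5/2) = x powr (-3/2)"
    using x powr_add[of x 1 "-5/2"] by simp
  finally show ?thesis by (simp add: x_def)
qed

lemma deriv_zeta3: "deriv zeta 3 = - complex_of_real (\<Sum>n. LL n / real (Suc n)^3)"
proof -
  define f where "f n s = exp (-(s * complex_of_real (LL n)))" for n and s :: complex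
  define f' where "f' n s = -(complex_of_real (LL n)) * exp (-(s * complex_of_real (LL n)))" for n and s :: complex
  have d: "(f n has_field_derivative f' n s) (at s within ball 3 (1/2))" for n s
    unfolding f_def f'_def by (auto intro!: derivative_eq_intros)
  have u: "uniformly_convergent_on (ball 3 (1/2)) (\<lambda>n s. \<Sum>i<n. f' i s)"
    by (rule Weierstrass_m_test'[OF _ summ_M]) (unfold f'_def, rule deriv_bound)
  have e3: "f n 3 = complex_of_real (1 / real (Suc n) ^ 3)" for n
  proof -
    have "exp (-(3 * complex_of_real (LL n))) = exp (complex_of_real (-(3 * LL n)))" by simp
    also have "\<dots> = complex_of_real (exp (-(3 * LL n)))" by (rule exp_of_real)
    finally show ?thesis unfolding f_def by (simp only: exp_3L)
  qed
  have sm: "summable (\<lambda>n. f n 3)"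
    unfolding e3 using summ_inv3 by (rule summable_of_real)
  have "((\<lambda>s. \<Sum>n. f n s) has_field_derivative (\<Sum>n. f' n 3)) (at 3)"
    by (rule has_field_derivative_series'(2)[OF convex_ball d u _ sm]) auto
  moreover have "(\<lambda>s. \<Sum>n. f n s) = zeta" unfolding zeta_exp f_def by (rule refl)
  ultimately have D: "deriv zeta 3 = (\<Sum>n. f' n 3)" by (simp add: DERIV_imp_deriv)
  have e3': "f' n 3 = complex_of_real (-(LL n / real (Suc n) ^ 3))" for n
    using e3[of n] unfolding f_def f'_def by simp
  have "(\<Sum>n. f' n 3) = complex_of_real (\<Sum>n. -(LL n / real (Suc n) ^ 3))"
    unfolding e3' by (rule suminf_of_real[symmetric]) (rule summable_minus[OF summ_D])
  also have "(\<Sum>n. -(LL n / real (Suc n) ^ 3)) = -(\<Sum>n. LL n / real (Suc n) ^ 3)"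
    by (rule suminf_minus[OF summ_D])
  finally show ?thesis using D by simp
qed



lemma even_split:
  fixes f :: "nat \<Rightarrow> real"
  assumes f: "summable f" and E: "(\<lambda>k. f (2*k+1)) sums E"
  shows "(\<lambda>k. f (2*k)) sums (suminf f - E)"
proof -
  have "((\<lambda>n. \<Sum>i<n. f i) \<circ> (\<lambda>N. 2*N)) \<longlonglongrightarrow> suminf f"
    by (rule LIMSEQ_subseq_LIMSEQ[OF summable_LIMSEQ[OF f]]) (auto simp: strict_mono_def)
  then have A: "(\<lambda>N. \<Sum>i<2*N. f i) \<longlonglongrightarrow> suminf f" by (simp add: o_def)
  have B: "(\<lambda>N. \<Sum>k<N. f (2*k+1)) \<longlonglongrightarrow> E" using E by (simp add: sums_def)
  have eq: "(\<Sum>k<N. f (2*k)) = (\<Sum>i<2*N. f i) - (\<Sum>k<N. f (2*k+1))" for N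
    using sum_split_even_odd[of f f N] by simp
  show ?thesis unfolding sums_def eq by (intro tendsto_diff A B)
qed

definition Z3 :: real where "Z3 = (\<Sum>n. 1 / real (Suc n) ^ 3)"
definition DD :: real where "DD = (\<Sum>n. LL n / real (Suc n) ^ 3)"

lemma odd_inv3: "(\<lambda>k. 1 / real (2*k+1) ^ 3) sums (7/8 * Z3)"
proof -
  have "(\<lambda>k. (1/8) * (1 / real (Suc k) ^ 3)) sums ((1/8) * Z3)"
    unfolding Z3_def by (intro sums_mult summable_sums summ_inv3)
  moreover have "(1/8) * (1 / real (Suc k) ^ 3) = 1 / real (Suc (2*k+1)) ^ 3" for k
  proof -
    have "real (Suc (2*k+1)) = 2 * real (Suc k)" by simp
    then have "real (Suc (2*k+1)) ^ 3 = 8 * real (Suc k) ^ 3" by (simp only: power_mult_distrib) simp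
    then show ?thesis by simp
  qed
  ultimately have "(\<lambda>k. 1 / real (Suc (2*k+1)) ^ 3) sums ((1/8) * Z3)" by simp
  from even_split[OF summ_inv3 this]
  have "(\<lambda>k. 1 / real (Suc (2*k)) ^ 3) sums (Z3 - (1/8) * Z3)" unfolding Z3_def .
  then show ?thesis by (simp add: algebra_simps)
qed

lemma odd_log3: "(\<lambda>k. ln (real (2*k+1)) / real (2*k+1) ^ 3) sums (7/8 * DD - ln 2 / 8 * Z3)"
proof -
  have "(\<lambda>k. (ln 2 / 8) * (1 / real (Suc k) ^ 3) + (1/8) * (LL k / real (Suc k) ^ 3)) sums
          ((ln 2 / 8) * Z3 + (1/8) * DD)"
    unfolding Z3_def DD_def by (intro sums_add sums_mult summable_sums summ_inv3 summ_D)
  moreover have "(ln 2 / 8) * (1 / real (Suc k) ^ 3) + (1/8) * (LL k / real (Suc k) ^ 3)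
                 = LL (2*k+1) / real (Suc (2*k+1)) ^ 3" for k
  proof -
    have r: "real (Suc (2*k+1)) = 2 * real (Suc k)" by simp
    have "LL (2*k+1) = ln 2 + LL k" unfolding LL_def r
      by (simp add: ln_mult del: of_nat_Suc)
    moreover have "real (Suc (2*k+1)) ^ 3 = 8 * real (Suc k) ^ 3" unfolding r power_mult_distrib by simp
    ultimately show ?thesis by (simp add: field_simps)
  qed
  ultimately have "(\<lambda>k. LL (2*k+1) / real (Suc (2*k+1)) ^ 3) sums ((ln 2 / 8) * Z3 + (1/8) * DD)" by simp
  from even_split[OF summ_D this]
  have "(\<lambda>k. LL (2*k) / real (Suc (2*k)) ^ 3) sums (DD - ((ln 2 / 8) * Z3 + (1/8) * DD))" unfolding DD_def .
  then show ?thesis by (simp add: algebra_simps LL_def)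
qed



lemma odd_split:
  fixes f :: "nat \<Rightarrow> real"
  assumes f: "summable f" and E: "(\<lambda>k. f (2*k)) sums E"
  shows "(\<lambda>k. f (2*k+1)) sums (suminf f - E)"
proof -
  have "((\<lambda>n. \<Sum>i<n. f i) \<circ> (\<lambda>N. 2*N)) \<longlonglongrightarrow> suminf f"
    by (rule LIMSEQ_subseq_LIMSEQ[OF summable_LIMSEQ[OF f]]) (auto simp: strict_mono_def)
  then have A: "(\<lambda>N. \<Sum>i<2*N. f i) \<longlonglongrightarrow> suminf f" by (simp add: o_def)
  have B: "(\<lambda>N. \<Sum>k<N. f (2*k)) \<longlonglongrightarrow> E" using E by (simp add: sums_def)
  have eq: "(\<Sum>k<N. f (2*k+1)) = (\<Sum>i<2*N. f i) - (\<Sum>k<N. f (2*k))" for N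
    using sum_split_even_odd[of f f N] by simp
  show ?thesis unfolding sums_def eq by (intro tendsto_diff A B)
qed

lemma artanh_series:
  fixes y :: real
  assumes y: "\<bar>y\<bar> < 1"
  shows "(\<lambda>k. y^(2*k+1) / real (2*k+1)) sums artanh y"
proof -
  define g where "g n = - ((-y)^n) / real n - - ((-(-y))^n) / real n" for n
  have A: "(\<lambda>n. - ((-y)^n) / of_nat n) sums ln (1 + y)" by (rule ln_series'[OF y])
  have B: "(\<lambda>n. - ((-(-y))^n) / of_nat n) sums ln (1 + -y)" by (rule ln_series') (use y in simp)
  have C: "g sums (ln (1 + y) - ln (1 + -y))" unfolding g_def by (rule sums_diff[OF A B])
  have g0: "(\<lambda>k. g (2*k)) sums 0"
  proof -
    have "g (2*k) = 0" for k unfolding g_def by simp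
    then show ?thesis by simp
  qed
  have "(\<lambda>k. g (2*k+1)) sums (suminf g - 0)"
    by (rule odd_split[OF sums_summable[OF C] g0])
  then have D: "(\<lambda>k. g (2*k+1)) sums (ln (1 + y) - ln (1 + -y))" using C sums_unique by fastforce
  have gm: "g m = 2 * (y^m / real m)" if "odd m" for m
    unfolding g_def using that by (simp add: power_minus_odd)
  have g1: "g (2*k+1) = 2 * (y^(2*k+1) / real (2*k+1))" for k
    by (rule gm) simp
  have "(\<lambda>k. (1/2) * g (2*k+1)) sums ((1/2) * (ln (1 + y) - ln (1 + -y)))"
    by (rule sums_mult[OF D])
  moreover have "(1/2) * (ln (1 + y) - ln (1 + -y)) = artanh y"
    using y by (simp add: artanh_def ln_div) (auto simp: abs_less_iff)
  moreover have "(\<lambda>k. (1/2) * g (2*k+1)) = (\<lambda>k. y^(2*k+1) / real (2*k+1))"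
    by (rule ext) (simp only: g1)
  ultimately show ?thesis by simp
qed



abbreviation RHS :: complex where
  "RHS \<equiv> (1/8) * (- 7 * deriv zeta 3
                   + zeta 3 * (- 7 + 7 * euler_mascheroni - 7 * \<i> * complex_of_real pi
                               - complex_of_real (ln 2)))"

lemma sum_integrals: "(\<lambda>k. integral {0<..} (Fk (real (2*k+1)))) sums RHS"
proof -
  have tm: "integral {0<..} (Fk (real (2*k+1))) =
      complex_of_real (ln (real (2*k+1)) / real (2*k+1) ^ 3)
      - (complex_of_real (1 - euler_mascheroni) + \<i> * complex_of_real pi) * complex_of_real (1 / real (2*k+1) ^ 3)" for k
  proof -
    have a: "real (2*k+1) \<ge> 1" by simp
    have nz: "complex_of_real (real (2*k+1)) \<noteq> 0" by (simp del: of_nat_Suc)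
    show ?thesis unfolding Fk_props(2)[OF a] using nz
      by (simp add: field_simps del: of_nat_Suc)
  qed
  have S1: "(\<lambda>k. complex_of_real (ln (real (2*k+1)) / real (2*k+1) ^ 3)) sums complex_of_real (7/8 * DD - ln 2 / 8 * Z3)"
    using odd_log3 by (simp only: sums_of_real_iff)
  have S2: "(\<lambda>k. complex_of_real (1 / real (2*k+1) ^ 3)) sums complex_of_real (7/8 * Z3)"
    using odd_inv3 by (simp only: sums_of_real_iff)
  have "(\<lambda>k. integral {0<..} (Fk (real (2*k+1)))) sums
         (complex_of_real (7/8 * DD - ln 2 / 8 * Z3) - (complex_of_real (1 - euler_mascheroni) + \<i> * complex_of_real pi) * complex_of_real (7/8 * Z3))"
    unfolding tm by (intro sums_diff S1 sums_mult S2)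
  moreover have "complex_of_real (7/8 * DD - ln 2 / 8 * Z3) - (complex_of_real (1 - euler_mascheroni) + \<i> * complex_of_real pi) * complex_of_real (7/8 * Z3) = RHS"
    unfolding deriv_zeta3 zeta3 Z3_def[symmetric] DD_def[symmetric]
    by (simp add: field_simps)
  ultimately show ?thesis by (simp only:)
qed



definition W :: "real \<Rightarrow> complex" where
  "W t = complex_of_real (t * ln t) + \<i> * complex_of_real (pi * t)"

definition f0 :: "real \<Rightarrow> complex" where
  "f0 x = complex_of_real (ln x) * Ln (complex_of_real (ln x)) * complex_of_real (artanh x) / complex_of_real x"

lemma Fk_eq: "Fk (real (2*k+1)) t = -(W t) * complex_of_real (exp(-t)^(2*k+1) / real (2*k+1))"
proof -
  have e: "exp(-(real (2*k+1) * t)) = exp(-t)^(2*k+1)"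
    using exp_of_nat_mult[of "2*k+1" "-t"] by simp
  have nz: "complex_of_real (real (2*k+1)) \<noteq> 0" by (simp del: of_nat_Suc)
  show ?thesis unfolding Fk_def e W_def using nz
    by (simp add: field_simps del: of_nat_Suc)
qed

lemma Fk_sums:
  assumes t: "t > 0"
  shows "(\<lambda>k. Fk (real (2*k+1)) t) sums (-(W t) * complex_of_real (artanh (exp(-t))))"
    and "summable (\<lambda>k. norm (Fk (real (2*k+1)) t))"
proof -
  have y: "\<bar>exp (-t)\<bar> < 1" using t by simp
  note A = artanh_series[OF y]
  have "(\<lambda>k. complex_of_real (exp(-t)^(2*k+1) / real (2*k+1))) sums complex_of_real (artanh (exp(-t)))"
    using A by (simp only: sums_of_real_iff)
  from sums_mult[OF this, of "-(W t)"]
  show "(\<lambda>k. Fk (real (2*k+1)) t) sums (-(W t) * complex_of_real (artanh (exp(-t))))"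
    unfolding Fk_eq .
  have "norm (Fk (real (2*k+1)) t) = norm (W t) * (exp(-t)^(2*k+1) / real (2*k+1))" for k
    unfolding Fk_eq norm_mult norm_minus_cancel norm_of_real by (simp del: of_nat_Suc)
  moreover have "summable (\<lambda>k. norm (W t) * (exp(-t)^(2*k+1) / real (2*k+1)))"
    by (rule summable_mult[OF sums_summable[OF A]])
  ultimately show "summable (\<lambda>k. norm (Fk (real (2*k+1)) t))" by simp
qed

lemma GG_eq:
  assumes t: "t > 0"
  shows "\<bar>- exp (-t)\<bar> *\<^sub>R f0 (exp (-t)) = -(W t) * complex_of_real (artanh (exp(-t)))"
proof -
  have L: "Ln (complex_of_real (-t)) = complex_of_real (ln t) + complex_of_real pi * \<i>"
    using Ln_of_real'[of "-t"] t by simp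
  have nz: "complex_of_real (exp (-t)) \<noteq> 0" by simp
  show ?thesis
    unfolding f0_def ln_exp W_def scaleR_conv_of_real
    using nz t by (simp add: L field_simps del: of_real_minus) (simp add: algebra_simps)
qed



lemma main_t:
  "(\<lambda>t. \<bar>- exp (-t)\<bar> *\<^sub>R f0 (exp (-t))) absolutely_integrable_on {0<..} \<and>
   integral {0<..} (\<lambda>t. \<bar>- exp (-t)\<bar> *\<^sub>R f0 (exp (-t))) = RHS"
proof -
  define S :: "real set" where "S = {0<..}"
  define a where "a k = real (2*k+1)" for k
  define GG where "GG t = \<bar>- exp (-t)\<bar> *\<^sub>R f0 (exp (-t))" for t
  define FF where "FF k x = indicator S x *\<^sub>R Fk (a k) x" for k x
  have a1: "a k \<ge> 1" for k by (simp add: a_def)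
  have int: "integrable lebesgue (FF k)" for k
    using Fk_props(1)[OF a1[of k]] unfolding set_integrable_def FF_def[abs_def] S_def .
  have AE: "AE x in lebesgue. summable (\<lambda>k. norm (FF k x))"
  proof (rule AE_I2)
    fix x show "summable (\<lambda>k. norm (FF k x))"
    proof (cases "x \<in> S")
      case True
      then show ?thesis using Fk_sums(2)[of x] by (simp add: FF_def S_def a_def)
    next
      case False
      then show ?thesis by (simp add: FF_def)
    qed
  qed
  have nI: "(\<integral>x. norm (FF k x) \<partial>lebesgue) = integral S (\<lambda>x. norm (Fk (a k) x))" for k
  proof -
    have e: "(\<lambda>x. norm (FF k x)) = (\<lambda>x. indicator S x *\<^sub>R norm (Fk (a k) x))"
      by (auto simp: FF_def indicator_def)
    have si: "set_integrable lebesgue S (\<lambda>x. norm (Fk (a k) x))"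
      unfolding set_integrable_def e[symmetric] by (rule integrable_norm[OF int])
    have "(\<integral>x. norm (FF k x) \<partial>lebesgue) = set_lebesgue_integral lebesgue S (\<lambda>x. norm (Fk (a k) x))"
      unfolding set_lebesgue_integral_def e by (rule refl)
    also have "\<dots> = integral S (\<lambda>x. norm (Fk (a k) x))"
      by (rule set_lebesgue_integral_eq_integral(2)[OF si])
    finally show ?thesis .
  qed
  have sn: "summable (\<lambda>k. \<integral>x. norm (FF k x) \<partial>lebesgue)"
  proof (rule summable_comparison_test')
    show "summable (\<lambda>k. (3 + pi) * (1 / real (Suc k) ^ 2))"
      by (rule summable_mult[OF summ_inv2])
  next
    fix k
    have nn: "0 \<le> (\<integral>x. norm (FF k x) \<partial>lebesgue)" by (rule integral_nonneg_AE) simp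
    have "(\<integral>x. norm (FF k x) \<partial>lebesgue) \<le> (3 + pi) / a k ^ 2"
      unfolding nI S_def by (rule Fk_props(3)[OF a1])
    also have "\<dots> \<le> (3 + pi) * (1 / real (Suc k) ^ 2)"
    proof -
      have "real (Suc k) ^ 2 \<le> a k ^ 2" unfolding a_def by (intro power_mono) auto
      then have "1 / a k ^ 2 \<le> 1 / real (Suc k) ^ 2"
        by (intro divide_left_mono) (use a1[of k] in \<open>auto simp del: of_nat_Suc\<close>)
      then show ?thesis using pi_gt3 by (simp add: divide_inverse mult_left_mono del: of_nat_Suc)
    qed
    finally show "norm (\<integral>x. norm (FF k x) \<partial>lebesgue) \<le> (3 + pi) * (1 / real (Suc k) ^ 2)"
      using nn by simp
  qed
  have I1: "(\<lambda>k. integral\<^sup>L lebesgue (FF k)) sums (\<integral>x. (\<Sum>k. FF k x) \<partial>lebesgue)"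
    by (rule sums_integral[OF int AE sn])
  have I2: "integral\<^sup>L lebesgue (FF k) = integral {0<..} (Fk (real (2*k+1)))" for k
  proof -
    have "integral\<^sup>L lebesgue (FF k) = set_lebesgue_integral lebesgue S (Fk (a k))"
      unfolding set_lebesgue_integral_def FF_def by (rule refl)
    also have "\<dots> = integral S (Fk (a k))"
      by (rule set_lebesgue_integral_eq_integral(2)) (use Fk_props(1)[OF a1[of k]] in \<open>simp add: S_def\<close>)
    finally show ?thesis by (simp add: S_def a_def)
  qed
  have val: "(\<integral>x. (\<Sum>k. FF k x) \<partial>lebesgue) = RHS"
    using I1 sum_integrals unfolding I2 by (rule sums_unique2)
  have pt: "(\<Sum>k. FF k x) = indicator S x *\<^sub>R GG x" for x
  proof (cases "x \<in> S")
    case True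
    then have x: "x > 0" by (simp add: S_def)
    have "(\<Sum>k. FF k x) = (\<Sum>k. Fk (real (2*k+1)) x)" using True by (simp add: FF_def a_def)
    also have "\<dots> = -(W x) * complex_of_real (artanh (exp(-x)))" by (rule sums_unique[symmetric, OF Fk_sums(1)[OF x]])
    also have "\<dots> = GG x" unfolding GG_def by (rule GG_eq[OF x, symmetric])
    finally show ?thesis using True by simp
  next
    case False
    then show ?thesis by (simp add: FF_def)
  qed
  have si: "set_integrable lebesgue S GG"
    using integrable_suminf[OF int AE sn] unfolding set_integrable_def pt .
  have "set_lebesgue_integral lebesgue S GG = RHS"
    using val unfolding set_lebesgue_integral_def pt .
  then have "integral S GG = RHS" using set_lebesgue_integral_eq_integral(2)[OF si] by simp
  with si show ?thesis unfolding S_def GG_def by simp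
qed



theorem mainTheorem13:
  shows "((\<lambda>x::real. complex_of_real (ln x) * Ln (complex_of_real (ln x))
            * complex_of_real (artanh x) / complex_of_real x)
          has_integral
          (1/8) * (- 7 * deriv zeta 3
                   + zeta 3 * (- 7 + 7 * euler_mascheroni - 7 * \<i> * complex_of_real pi
                               - complex_of_real (ln 2)))) {0<..<1}"
proof -
  have img: "(\<lambda>t. exp (-t)) ` {0<..} = ({0<..<1} :: real set)"
  proof safe
    fix x :: real assume x: "x \<in> {0<..<1}"
    then have "x = exp (-(-ln x))" "-ln x > 0" by auto
    then show "x \<in> (\<lambda>t. exp (-t)) ` {0<..}" by blast
  qed auto
  have "f0 absolutely_integrable_on (\<lambda>t. exp (-t)) ` {0<..} \<and> integral ((\<lambda>t. exp (-t)) ` {0<..}) f0 = RHS"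
  proof -
    have d: "((\<lambda>t. exp (-t)) has_field_derivative - exp (-x)) (at x within {0<..})" for x :: real
      by (auto intro!: derivative_eq_intros)
    have i: "inj_on (\<lambda>t::real. exp (-t)) {0<..}" by (auto intro: inj_onI)
    have l: "({0<..}::real set) \<in> sets lebesgue" by simp
    show ?thesis
      using has_absolute_integral_change_of_variables_real[where S="{0<..}" and g="\<lambda>t. exp (-t)"
              and h="\<lambda>t. - exp (-t)" and f=f0 and b=RHS, OF l d i] main_t by blast
  qed
  then have ai: "f0 absolutely_integrable_on {0<..<1}" and iv: "integral {0<..<1} f0 = RHS"
    unfolding img by auto
  have "(f0 has_integral integral {0<..<1} f0) {0<..<1}"
    by (rule integrable_integral[OF set_lebesgue_integral_eq_integral(1)[OF ai]])
  then have "(f0 has_integral RHS) {0<..<1}" unfolding iv .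
  then show ?thesis unfolding f0_def[abs_def] .
qed

end
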